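(* Let $n\ge 2$ be an integer and let $s$ be a positive integer with $2s \ge n + \frac{n}{\sqrt[4]{n}-1}$. Then \[ \frac{r_{2(s+1)}(n)}{n^{\frac{s}{2}}} \le \frac{r_{2s}(n)}{n^{\frac{s-1}{2}}}, \] i.e. $s\mapsto r_{2s}(n)/n^{(s-1)/2}$ is non-increasing on this range of $s$.
   Context: $r_s(n)=\#\{(x_1,\dots,x_s)\in\mathbb{Z}^s : x_1^2+\cdots+x_s^2=n\}$ is the number of representations of $n$ as a sum of $s$ squares. *)

theory Defs
  imports "HOL-Analysis.Analysis"
begin

definition r :: "nat \<Rightarrow> nat \<Rightarrow> nat" where
  "r s n = card {x :: nat \<Rightarrow> int. (\<forall>i\<ge>s. x i = 0) \<and> (\<Sum>i<s. (x i)^2) = int n}"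

end

theory Submission
  imports Defs
begin

definition AA :: "nat \<Rightarrow> nat \<Rightarrow> (nat \<Rightarrow> int) set" where
  "AA m n = {x :: nat \<Rightarrow> int. (\<forall>i\<ge>m. x i = 0) \<and> (\<Sum>i<m. (x i)^2) = int n}"

lemma r_AA: "r m n = card (AA m n)"
  unfolding r_def AA_def by simp

lemma sq_bound:
  assumes "x \<in> AA m n" "i < m"
  shows "(x i)^2 \<le> int n"
proof -
  have "(x i)^2 \<le> (\<Sum>j<m. (x j)^2)"
    using assms(2) by (intro member_le_sum) auto
  thus ?thesis using assms(1) unfolding AA_def by simp
qed

lemma abs_le_sq: "\<bar>a::int\<bar> \<le> a^2"
proof (cases "a = 0")
  case False
  then have "1 \<le> \<bar>a\<bar>" by auto
  then have "\<bar>a\<bar> * 1 \<le> \<bar>a\<bar> * \<bar>a\<bar>" by (intro mult_left_mono) auto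
  then show ?thesis by (simp add: power2_eq_square)
qed simp

lemma finA: "finite (AA m n)"
proof -
  have "AA m n \<subseteq> (\<lambda>g i. if i < m then g i else 0) ` (PiE {..<m} (\<lambda>_. {-int n..int n}))"
  proof
    fix x assume x: "x \<in> AA m n"
    have "restrict x {..<m} \<in> PiE {..<m} (\<lambda>_. {-int n..int n})"
    proof (intro restrict_PiE_iff[THEN iffD2] ballI)
      fix i assume "i \<in> {..<m}"
      then have "(x i)^2 \<le> int n" using sq_bound x by auto
      moreover have "\<bar>x i\<bar> \<le> (x i)^2"
        by (rule abs_le_sq)
      ultimately show "x i \<in> {-int n..int n}" by auto
    qed
    moreover have "x = (\<lambda>i. if i < m then restrict x {..<m} i else 0)"
      using x unfolding AA_def by (auto simp: fun_eq_iff)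
    ultimately show "x \<in> (\<lambda>g i. if i < m then g i else 0) ` (PiE {..<m} (\<lambda>_. {-int n..int n}))"
      by blast
  qed
  moreover have "finite (PiE {..<m} (\<lambda>_. {-int n..int n}))"
    by (intro finite_PiE) auto
  ultimately show ?thesis by (meson finite_imageI finite_subset)
qed

lemma supp_card:
  assumes "x \<in> AA m n"
  shows "card {i\<in>{..<m}. x i \<noteq> 0} \<le> n"
proof -
  let ?S = "{i\<in>{..<m}. x i \<noteq> 0}"
  have "int (card ?S) = (\<Sum>i\<in>?S. (1::int))" by simp
  also have "\<dots> \<le> (\<Sum>i\<in>?S. (x i)^2)"
  proof (rule sum_mono)
    fix i assume "i \<in> ?S"
    then have "x i \<noteq> 0" by auto
    then have "1 \<le> \<bar>x i\<bar>" by auto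
    also have "\<dots> \<le> (x i)^2" by (rule abs_le_sq)
    finally show "1 \<le> (x i)^2" .
  qed
  also have "\<dots> \<le> (\<Sum>i<m. (x i)^2)"
    by (intro sum_mono2) auto
  also have "\<dots> = int n" using assms unfolding AA_def by simp
  finally show ?thesis by simp
qed

definition ins0 :: "nat \<Rightarrow> (nat \<Rightarrow> int) \<Rightarrow> nat \<Rightarrow> int" where
  "ins0 i y = (\<lambda>t. if t < i then y t else if t = i then 0 else y (t - 1))"

definition del0 :: "nat \<Rightarrow> (nat \<Rightarrow> int) \<Rightarrow> nat \<Rightarrow> int" where
  "del0 i x = (\<lambda>t. if t < i then x t else x (t + 1))"

lemma ins_del: "x i = 0 \<Longrightarrow> ins0 i (del0 i x) = x"
  unfolding ins0_def del0_def by (auto simp: fun_eq_iff)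

lemma del_in:
  assumes "x \<in> AA (Suc m) n" "i \<le> m" "x i = 0"
  shows "del0 i x \<in> AA m n"
proof -
  have z: "\<forall>j\<ge>Suc m. x j = 0" and sm: "(\<Sum>j<Suc m. (x j)^2) = int n"
    using assms(1) unfolding AA_def by auto
  have "(\<Sum>j<Suc m. (x j)^2) = (\<Sum>j\<in>{..<Suc m}-{i}. (x j)^2)"
    using assms(2,3) by (subst sum.remove[of _ i]) auto
  also have "\<dots> = (\<Sum>j<m. (del0 i x j)^2)"
  proof (rule sum.reindex_bij_witness[where i = "\<lambda>j. if j < i then j else j + 1"
        and j = "\<lambda>j. if j < i then j else j - 1"])
  qed (use assms(2) in \<open>auto simp: del0_def split: if_splits\<close>)
  finally have "(\<Sum>j<m. (del0 i x j)^2) = int n" using sm by simp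
  moreover have "\<forall>j\<ge>m. del0 i x j = 0" using z assms(2) by (auto simp: del0_def)
  ultimately show ?thesis unfolding AA_def by simp
qed

lemma step:
  assumes "n \<le> m"
  shows "(Suc m - n) * card (AA (Suc m) n) \<le> Suc m * card (AA m n)"
proof -
  let ?P = "Sigma (AA (Suc m) n) (\<lambda>x. {i\<in>{..m}. x i = 0})"
  have fin: "finite (AA (Suc m) n)" by (rule finA)
  have "(Suc m - n) * card (AA (Suc m) n) = (\<Sum>x\<in>AA (Suc m) n. Suc m - n)" by simp
  also have "\<dots> \<le> (\<Sum>x\<in>AA (Suc m) n. card {i\<in>{..m}. x i = 0})"
  proof (rule sum_mono)
    fix x assume x: "x \<in> AA (Suc m) n"
    have "{..m} = {i\<in>{..<Suc m}. x i \<noteq> 0} \<union> {i\<in>{..m}. x i = 0}" by auto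
    then have "Suc m \<le> card {i\<in>{..<Suc m}. x i \<noteq> 0} + card {i\<in>{..m}. x i = 0}"
      by (metis card_Un_le card_atMost)
    with supp_card[OF x] show "Suc m - n \<le> card {i\<in>{..m}. x i = 0}" by linarith
  qed
  also have "\<dots> = card ?P" using fin by (subst card_SigmaI) auto
  also have "\<dots> \<le> card ((\<lambda>(y,i). (ins0 i y, i)) ` (AA m n \<times> {..m}))"
  proof (rule card_mono)
    show "finite ((\<lambda>(y,i). (ins0 i y, i)) ` (AA m n \<times> {..m}))"
      using finA by auto
    show "?P \<subseteq> (\<lambda>(y,i). (ins0 i y, i)) ` (AA m n \<times> {..m})"
    proof
      fix p assume "p \<in> ?P"
      then obtain x i where p: "p = (x, i)" "x \<in> AA (Suc m) n" "i \<le> m" "x i = 0" by auto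
      then have "(del0 i x, i) \<in> AA m n \<times> {..m}" using del_in by auto
      moreover have "p = (\<lambda>(y,i). (ins0 i y, i)) (del0 i x, i)" using p ins_del by simp
      ultimately show "p \<in> (\<lambda>(y,i). (ins0 i y, i)) ` (AA m n \<times> {..m})" by blast
    qed
  qed
  also have "\<dots> \<le> card (AA m n \<times> {..m})" using finA by (intro card_image_le) auto
  also have "\<dots> = Suc m * card (AA m n)" by (simp add: card_cartesian_product)
  finally show ?thesis .
qed


theorem lemma3p1:
  fixes n s :: nat
  assumes "n \<ge> 2" and "s \<ge> 1"
    and "2 * real s \<ge> real n + real n / (root 4 (real n) - 1)"
  shows "real (r (2 * (s + 1)) n) / real n powr (real s / 2)
           \<le> real (r (2 * s) n) / real n powr ((real s - 1) / 2)"
proof -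
  define t where "t = root 4 (real n)"
  define k where "k = 2 * s"
  have t1: "t > 1" unfolding t_def using assms(1) by (simp add: real_root_gt_1_iff)
  have hk: "real k \<ge> real n + real n / (t - 1)" using assms(3) unfolding t_def k_def by simp
  have pos: "real n / (t - 1) > 0" using t1 assms(1) by simp
  hence nk: "n < k" using hk by linarith
  have "real k * (t - 1) \<ge> (real n + real n / (t - 1)) * (t - 1)"
    using hk t1 by (intro mult_right_mono) auto
  also have "(real n + real n / (t - 1)) * (t - 1) = real n * t"
    using t1 by (simp add: field_simps)
  finally have key: "t * (real k - real n) \<ge> real k" by (simp add: algebra_simps)
  define a where "a = real k + 1 - real n"
  define b where "b = real k + 2 - real n"
  have a0: "a > 0" and b0: "b > 0" using nk unfolding a_def b_def by auto
  have ta: "t * a \<ge> real k + 1" using key t1 unfolding a_def by (simp add: algebra_simps)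
  have tb: "t * b \<ge> real k + 2" using key t1 unfolding b_def by (simp add: algebra_simps)
  define R0 where "R0 = real (card (AA k n))"
  define R1 where "R1 = real (card (AA (Suc k) n))"
  define R2 where "R2 = real (card (AA (Suc (Suc k)) n))"
  have h1: "a * R1 \<le> (real k + 1) * R0"
  proof -
    have "real ((Suc k - n) * card (AA (Suc k) n)) \<le> real (Suc k * card (AA k n))"
      using step[of n k] nk by (intro of_nat_mono) linarith
    hence "real (Suc k - n) * R1 \<le> real (Suc k) * R0"
      unfolding R0_def R1_def by (simp only: of_nat_mult)
    moreover have "real (Suc k - n) = a" using nk unfolding a_def by (simp add: of_nat_diff)
    ultimately show ?thesis by (simp add: add.commute)
  qed
  have h2: "b * R2 \<le> (real k + 2) * R1"
  proof -
    have "real ((Suc (Suc k) - n) * card (AA (Suc (Suc k)) n)) \<le> real (Suc (Suc k) * card (AA (Suc k) n))"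
      using step[of n "Suc k"] nk by (intro of_nat_mono) linarith
    hence "real (Suc (Suc k) - n) * R2 \<le> real (Suc (Suc k)) * R1"
      unfolding R2_def R1_def by (simp only: of_nat_mult)
    moreover have "real (Suc (Suc k) - n) = b" using nk unfolding b_def by (simp add: of_nat_diff)
    ultimately show ?thesis by (simp add: add.commute)
  qed
  have R0p: "R0 \<ge> 0" "R1 \<ge> 0" "R2 \<ge> 0" unfolding R0_def R1_def R2_def by auto
  have "(a * b) * R2 = a * (b * R2)" by simp
  also have "\<dots> \<le> a * ((real k + 2) * R1)" using h2 a0 by (intro mult_left_mono) auto
  also have "\<dots> = (real k + 2) * (a * R1)" by simp
  also have "\<dots> \<le> (real k + 2) * ((real k + 1) * R0)" using h1 by (intro mult_left_mono) auto
  also have "\<dots> = ((real k + 1) * (real k + 2)) * R0" by simp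
  also have "\<dots> \<le> ((t * a) * (t * b)) * R0"
    using ta tb R0p by (intro mult_right_mono mult_mono) auto
  also have "\<dots> = (a * b) * (t^2 * R0)" by (simp add: power2_eq_square)
  finally have "R2 \<le> t^2 * R0" using a0 b0 by simp
  moreover have "t^2 = sqrt (real n)"
  proof -
    have "(t^2)^2 = real n" unfolding t_def
      by (simp add: power_mult[symmetric])
    thus ?thesis by (metis real_sqrt_abs abs_of_nonneg zero_le_power2)
  qed
  ultimately have main: "R2 \<le> R0 * sqrt (real n)" by (simp add: mult.commute)
  have np: "real n > 0" using assms(1) by simp
  have eq: "real n powr (real s / 2) = real n powr ((real s - 1) / 2) * sqrt (real n)"
    using np by (simp add: powr_half_sqrt[symmetric] powr_add[symmetric] field_simps)
  have rr: "r (2 * (s + 1)) n = card (AA (Suc (Suc k)) n)" "r (2 * s) n = card (AA k n)"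
    unfolding r_AA k_def by simp_all
  have q: "real n powr ((real s - 1) / 2) > 0" using np by simp
  have sp: "sqrt (real n) > 0" using np by simp
  show ?thesis unfolding rr eq R2_def[symmetric] R0_def[symmetric]
    using main q sp by (simp add: divide_simps mult.commute mult.left_commute)
qed

end
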